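(* For any $z\ge1$, $$\mathcal{E}^{\mathrm{TW}}_{m,1}\le 2z^{-\nu}\,\mathcal{K}(z),\qquad \nu=\lceil n/2\rceil.$$
   Context: $m$-twist system with parameter $\rho\in(0,1/2]$ on $n$ agents: at each time $t$ the agents are relabeled so that their positions satisfy $x_1\le\dots\le x_n$. A partition of $[n]$ into at most $m$ intervals of consecutive indices $[u_{t,l},v_{t,l}]$ (blocks) is given. The next sorted positions $y_1\le\dots\le y_n$ satisfy, for every block $[u,v]$ and $i\in[u,v]$, $$(1-\rho)x_u+\rho x_{\min\{i+1,v\}}\le y_i\le\rho x_{\max\{i-1,u\}}+(1-\rho)x_v.$$ Definitions: - The $1$-energy is $\sum_t\sum_l(x_{v_{t,l}}(t)-x_{u_{t,l}}(t))$. - $\mathcal{E}^{\mathrm{TW}}_{m,1}$ is its supremum over all $m$-twist systems with initial positions in $[0,1]$. - For $k\in[n]$, let $v(k)$ (resp. $u(k)$) be the right (resp. left) endpoint of the block containing $k$ at time $t$. - $K_t(z)=\sum_{k=1}^n(x_{v(k)}(t)-x_k(t))z^k$, and $K(z)=\sum_{t\ge0}K_t(z)$. - $\mathcal{K}(z)$ is the supremum of $K(z)$ over all $m$-twist systems with initial positions in $[0,1]$. *)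

theory Defs
  imports Complex_Main "HOL-Library.Extended_Nonnegative_Real"
begin

text \<open>Agents are indexed 1..n. A configuration at time t is x t :: nat => real
(only indices 1..n matter), always stored in sorted order. A block partition at
time t is a finite set of pairs (u,v) standing for the index interval [u,v].\<close>

definition block_partition :: "nat \<Rightarrow> nat \<Rightarrow> (nat \<times> nat) set \<Rightarrow> bool" where
  "block_partition n m B \<longleftrightarrow> finite B \<and> card B \<le> m \<and>
     (\<forall>(u,v)\<in>B. 1 \<le> u \<and> u \<le> v \<and> v \<le> n) \<and>
     (\<forall>k\<in>{1..n}. \<exists>!p. p \<in> B \<and> fst p \<le> k \<and> k \<le> snd p)"

definition twist_system ::
  "nat \<Rightarrow> nat \<Rightarrow> real \<Rightarrow> (nat \<Rightarrow> nat \<Rightarrow> real) \<Rightarrow> (nat \<Rightarrow> (nat \<times> nat) set) \<Rightarrow> bool" where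
  "twist_system n m \<rho> x B \<longleftrightarrow>
     (\<forall>t. (\<forall>i j. 1 \<le> i \<longrightarrow> i \<le> j \<longrightarrow> j \<le> n \<longrightarrow> x t i \<le> x t j) \<and>
          block_partition n m (B t) \<and>
          (\<forall>(u,v)\<in>B t. \<forall>i\<in>{u..v}.
              (1 - \<rho>) * x t u + \<rho> * x t (min (i + 1) v) \<le> x (Suc t) i \<and>
              x (Suc t) i \<le> \<rho> * x t (max (i - 1) u) + (1 - \<rho>) * x t v))"

definition blk_right :: "(nat \<times> nat) set \<Rightarrow> nat \<Rightarrow> nat" where
  "blk_right B k = snd (THE p. p \<in> B \<and> fst p \<le> k \<and> k \<le> snd p)"

definition one_energy :: "(nat \<Rightarrow> nat \<Rightarrow> real) \<Rightarrow> (nat \<Rightarrow> (nat \<times> nat) set) \<Rightarrow> ennreal" where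
  "one_energy x B = (\<Sum>t. ennreal (\<Sum>p\<in>B t. x t (snd p) - x t (fst p)))"

definition K_gen :: "nat \<Rightarrow> (nat \<Rightarrow> nat \<Rightarrow> real) \<Rightarrow> (nat \<Rightarrow> (nat \<times> nat) set) \<Rightarrow> real \<Rightarrow> ennreal" where
  "K_gen n x B z = (\<Sum>t. ennreal (\<Sum>k=1..n. (x t (blk_right (B t) k) - x t k) * z ^ k))"

definition admissible :: "nat \<Rightarrow> nat \<Rightarrow> real \<Rightarrow> ((nat \<Rightarrow> nat \<Rightarrow> real) \<times> (nat \<Rightarrow> (nat \<times> nat) set)) set" where
  "admissible n m \<rho> = {(x, B). twist_system n m \<rho> x B \<and> (\<forall>i\<in>{1..n}. 0 \<le> x 0 i \<and> x 0 i \<le> 1)}"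

definition E_TW :: "nat \<Rightarrow> nat \<Rightarrow> real \<Rightarrow> ennreal" where
  "E_TW n m \<rho> = (SUP (x, B)\<in>admissible n m \<rho>. one_energy x B)"

definition K_TW :: "nat \<Rightarrow> nat \<Rightarrow> real \<Rightarrow> real \<Rightarrow> ennreal" where
  "K_TW n m \<rho> z = (SUP (x, B)\<in>admissible n m \<rho>. K_gen n x B z)"

end

theory Submission
  imports Defs
begin

lemma bp_the:
  assumes "block_partition n m B" "p \<in> B" "fst p \<le> k" "k \<le> snd p" "k \<in> {1..n}"
  shows "(THE p. p \<in> B \<and> fst p \<le> k \<and> k \<le> snd p) = p"
proof -
  from assms(1,5) have "\<exists>!p. p \<in> B \<and> fst p \<le> k \<and> k \<le> snd p"
    unfolding block_partition_def by blast
  then show ?thesis using assms(2-4) by (metis (mono_tags, lifting) the1_equality)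
qed

lemma blk_right_eq:
  assumes "block_partition n m B" "(u,v) \<in> B" "u \<le> k" "k \<le> v" "k \<in> {1..n}"
  shows "blk_right B k = v"
  using bp_the[OF assms(1,2) _ _ assms(5)] assms(3,4) unfolding blk_right_def by simp

lemma blk_right_bounds:
  assumes "block_partition n m B" "k \<in> {1..n}"
  shows "k \<le> blk_right B k \<and> blk_right B k \<le> n"
proof -
  from assms obtain p where p: "p \<in> B" "fst p \<le> k" "k \<le> snd p"
    unfolding block_partition_def by blast
  obtain u v where uv: "p = (u,v)" by (cases p)
  have "blk_right B k = v" using blk_right_eq[OF assms(1) _ _ _ assms(2)] p uv by simp
  moreover have "v \<le> n" using assms(1) p uv unfolding block_partition_def by auto
  ultimately show ?thesis using p uv by simp
qed

definition rx :: "nat \<Rightarrow> (nat \<Rightarrow> nat \<Rightarrow> real) \<Rightarrow> nat \<Rightarrow> nat \<Rightarrow> real" where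
  "rx n x t k = 1 - x t (n + 1 - k)"

definition rB :: "nat \<Rightarrow> (nat \<Rightarrow> (nat \<times> nat) set) \<Rightarrow> nat \<Rightarrow> (nat \<times> nat) set" where
  "rB n B t = (\<lambda>(u,v). (n + 1 - v, n + 1 - u)) ` B t"

lemma rB_bp:
  assumes "block_partition n m B"
  shows "block_partition n m ((\<lambda>(u,v). (n + 1 - v, n + 1 - u)) ` B)"
proof -
  let ?f = "(\<lambda>(u,v). (n + 1 - v, n + 1 - u))"
  have fin: "finite B" and c: "card B \<le> m" and bd: "\<forall>(u,v)\<in>B. 1 \<le> u \<and> u \<le> v \<and> v \<le> n"
    and un: "\<forall>k\<in>{1..n}. \<exists>!p. p \<in> B \<and> fst p \<le> k \<and> k \<le> snd p"
    using assms unfolding block_partition_def by auto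
  have c1: "card (?f ` B) \<le> m" using card_image_le[OF fin, of ?f] c by linarith
  have bdr: "\<And>u v. (u,v) \<in> B \<Longrightarrow> 1 \<le> u \<and> u \<le> v \<and> v \<le> n" using bd by blast
  have b1: "\<forall>(u,v)\<in>?f ` B. 1 \<le> u \<and> u \<le> v \<and> v \<le> n"
  proof (intro ballI)
    fix q assume "q \<in> ?f ` B"
    then obtain u v where uv: "(u,v) \<in> B" "q = (n + 1 - v, n + 1 - u)" by auto
    have "1 \<le> u \<and> u \<le> v \<and> v \<le> n" using bdr[OF uv(1)] .
    then show "case q of (u,v) \<Rightarrow> 1 \<le> u \<and> u \<le> v \<and> v \<le> n" using uv(2) by auto
  qed
  have u1: "\<forall>k\<in>{1..n}. \<exists>!p. p \<in> ?f ` B \<and> fst p \<le> k \<and> k \<le> snd p"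
  proof
    fix k assume k: "k \<in> {1..n}"
    then have j: "n + 1 - k \<in> {1..n}" by auto
    then obtain p where p: "p \<in> B" "fst p \<le> n + 1 - k" "n + 1 - k \<le> snd p"
      using un by blast
    obtain u v where uv: "p = (u,v)" by (cases p)
    have "?f p \<in> ?f ` B" using p(1) by blast
    moreover have "fst (?f p) \<le> k \<and> k \<le> snd (?f p)"
      using p uv bdr[of u v] k by auto
    ultimately have w: "?f p \<in> ?f ` B \<and> fst (?f p) \<le> k \<and> k \<le> snd (?f p)" by (rule conjI)
    have un2: "q = ?f p" if q: "q \<in> ?f ` B \<and> fst q \<le> k \<and> k \<le> snd q" for q
    proof -
      from q obtain u2 v2 where q2: "(u2,v2) \<in> B" "q = ?f (u2,v2)" by auto
      have "u2 \<le> n + 1 - k \<and> n + 1 - k \<le> v2" using q q2 bdr[OF q2(1)] k by auto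
      moreover have "\<exists>!p. p \<in> B \<and> fst p \<le> n + 1 - k \<and> n + 1 - k \<le> snd p" using un j by blast
      ultimately have "(u2,v2) = p" using p q2(1) by (metis fst_conv snd_conv)
      then show ?thesis using q2 by simp
    qed
    show "\<exists>!p. p \<in> ?f ` B \<and> fst p \<le> k \<and> k \<le> snd p"
      by (rule ex1I[of _ "?f p"], rule w, rule un2)
  qed
  show ?thesis unfolding block_partition_def
    by (intro conjI finite_imageI fin c1 b1 u1)
qed

lemma rx_twist:
  assumes "twist_system n m \<rho> x B"
  shows "twist_system n m \<rho> (rx n x) (rB n B)"
  unfolding twist_system_def
proof (rule allI, intro conjI)
  fix t
  have bp: "block_partition n m (B t)" using assms unfolding twist_system_def by blast
  have srt: "\<And>i j. 1 \<le> i \<Longrightarrow> i \<le> j \<Longrightarrow> j \<le> n \<Longrightarrow> x t i \<le> x t j"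
    using assms unfolding twist_system_def by blast
  have dyn: "\<forall>(u,v)\<in>B t. \<forall>i\<in>{u..v}.
              (1 - \<rho>) * x t u + \<rho> * x t (min (i + 1) v) \<le> x (Suc t) i \<and>
              x (Suc t) i \<le> \<rho> * x t (max (i - 1) u) + (1 - \<rho>) * x t v"
    using assms unfolding twist_system_def by blast
  have bd: "\<forall>(u,v)\<in>B t. 1 \<le> u \<and> u \<le> v \<and> v \<le> n" using bp unfolding block_partition_def by auto
  show "\<forall>i j. 1 \<le> i \<longrightarrow> i \<le> j \<longrightarrow> j \<le> n \<longrightarrow> rx n x t i \<le> rx n x t j"
    unfolding rx_def using srt by auto
  show "block_partition n m (rB n B t)" unfolding rB_def by (rule rB_bp[OF bp])
  show "\<forall>(u',v')\<in>rB n B t. \<forall>i'\<in>{u'..v'}.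
              (1 - \<rho>) * rx n x t u' + \<rho> * rx n x t (min (i' + 1) v') \<le> rx n x (Suc t) i' \<and>
              rx n x (Suc t) i' \<le> \<rho> * rx n x t (max (i' - 1) u') + (1 - \<rho>) * rx n x t v'"
  proof (intro ballI, clarify)
    fix u' v' i' assume uv': "(u',v') \<in> rB n B t" and i': "i' \<in> {u'..v'}"
    from uv' obtain u v where uv: "(u,v) \<in> B t" "u' = n + 1 - v" "v' = n + 1 - u"
      unfolding rB_def by auto
    have b: "1 \<le> u" "u \<le> v" "v \<le> n" using bd uv(1) by auto
    define i where "i = n + 1 - i'"
    have i: "i \<in> {u..v}" "i' = n + 1 - i" using i' uv b unfolding i_def by auto
    have d: "(1 - \<rho>) * x t u + \<rho> * x t (min (i + 1) v) \<le> x (Suc t) i"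
            "x (Suc t) i \<le> \<rho> * x t (max (i - 1) u) + (1 - \<rho>) * x t v"
      using dyn uv(1) i(1) by auto
    have e1: "n + 1 - u' = v" "n + 1 - v' = u" "n + 1 - i' = i" using uv b i by auto
    have e2: "n + 1 - min (i' + 1) v' = max (i - 1) u" using uv b i by auto
    have e3: "n + 1 - max (i' - 1) u' = min (i + 1) v" using uv b i by auto
    show "(1 - \<rho>) * rx n x t u' + \<rho> * rx n x t (min (i' + 1) v') \<le> rx n x (Suc t) i' \<and>
              rx n x (Suc t) i' \<le> \<rho> * rx n x t (max (i' - 1) u') + (1 - \<rho>) * rx n x t v'"
    proof
      have "(1 - \<rho>) * (1 - x t v) + \<rho> * (1 - x t (max (i - 1) u)) = 1 - (\<rho> * x t (max (i - 1) u) + (1 - \<rho>) * x t v)"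
        by (simp add: algebra_simps)
      then show "(1 - \<rho>) * rx n x t u' + \<rho> * rx n x t (min (i' + 1) v') \<le> rx n x (Suc t) i'"
        unfolding rx_def e1 e2 using d(2) by linarith
      have "\<rho> * (1 - x t (min (i + 1) v)) + (1 - \<rho>) * (1 - x t u) = 1 - ((1 - \<rho>) * x t u + \<rho> * x t (min (i + 1) v))"
        by (simp add: algebra_simps)
      then show "rx n x (Suc t) i' \<le> \<rho> * rx n x t (max (i' - 1) u') + (1 - \<rho>) * rx n x t v'"
        unfolding rx_def e1 e3 using d(1) by linarith
    qed
  qed
qed

lemma rx_adm:
  assumes "(x,B) \<in> admissible n m \<rho>"
  shows "(rx n x, rB n B) \<in> admissible n m \<rho>"
proof -
  have "\<forall>i\<in>{1..n}. 0 \<le> rx n x 0 i \<and> rx n x 0 i \<le> 1"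
  proof
    fix i assume i: "i \<in> {1..n}"
    then have "n + 1 - i \<in> {1..n}" by auto
    then show "0 \<le> rx n x 0 i \<and> rx n x 0 i \<le> 1" using assms unfolding admissible_def rx_def by auto
  qed
  then show ?thesis using assms rx_twist unfolding admissible_def by auto
qed


lemma nu_bounds: "n \<le> 2 * nat \<lceil>real n / 2\<rceil> \<and> 2 * nat \<lceil>real n / 2\<rceil> \<le> n + 1"
proof -
  have "even n \<or> odd n" by blast
  then show ?thesis
  proof
    assume "even n" then obtain q where q: "n = 2 * q" by blast
    have "\<lceil>real n / 2\<rceil> = int q" using q by simp
    then show ?thesis using q by simp
  next
    assume "odd n" then obtain q where q: "n = 2 * q + 1" using oddE by blast
    have "real n / 2 = real q + 1/2" using q by simp
    then have "\<lceil>real n / 2\<rceil> = int (q + 1)" by (simp add: ceiling_unique)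
    then have "nat \<lceil>real n / 2\<rceil> = q + 1" by simp
    then show ?thesis using q by simp
  qed
qed

lemma key_ineq:
  fixes z xu xk xv :: real
  assumes z: "1 \<le> z" and o: "xu \<le> xk" "xk \<le> xv"
    and c: "(nu \<le> k \<and> k = u) \<or> (nu \<le> n + 1 - k \<and> k = v) \<or> (nu \<le> k \<and> nu \<le> n + 1 - k)"
    and ku: "k = u \<Longrightarrow> xk = xu" and kv: "k = v \<Longrightarrow> xk = xv"
  shows "z ^ nu * (xv - xu) \<le> (xv - xk) * z ^ k + (xk - xu) * z ^ (n + 1 - k)"
proof -
  have p1: "z ^ nu \<le> z ^ k" if "nu \<le> k" using power_increasing[OF that z] .
  have p2: "z ^ nu \<le> z ^ (n + 1 - k)" if "nu \<le> n + 1 - k" using power_increasing[OF that z] .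
  have "0 \<le> z ^ (n + 1 - k)" "0 \<le> z ^ k" using z by auto
  from c show ?thesis
  proof (elim disjE conjE)
    assume "nu \<le> k" "k = u"
    have "(xv - xu) * z ^ nu \<le> (xv - xu) * z ^ k" by (rule mult_left_mono[OF p1]) (use o \<open>nu \<le> k\<close> in auto)
    then show ?thesis using ku \<open>k = u\<close> by (simp add: mult.commute)
  next
    assume "nu \<le> n + 1 - k" "k = v"
    have "(xv - xu) * z ^ nu \<le> (xv - xu) * z ^ (n + 1 - k)" by (rule mult_left_mono[OF p2]) (use o \<open>nu \<le> n + 1 - k\<close> in auto)
    then show ?thesis using kv \<open>k = v\<close> by (simp add: mult.commute)
  next
    assume a: "nu \<le> k" "nu \<le> n + 1 - k"
    have "(xv - xk) * z ^ nu \<le> (xv - xk) * z ^ k" by (rule mult_left_mono[OF p1[OF a(1)]]) (use o in auto)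
    moreover have "(xk - xu) * z ^ nu \<le> (xk - xu) * z ^ (n + 1 - k)" by (rule mult_left_mono[OF p2[OF a(2)]]) (use o in auto)
    ultimately show ?thesis by (simp add: algebra_simps)
  qed
qed

lemma step_ineq:
  assumes ts: "twist_system n m \<rho> x B" and z: "1 \<le> z"
  shows "z ^ nat \<lceil>real n / 2\<rceil> * (\<Sum>p\<in>B t. x t (snd p) - x t (fst p)) \<le>
    (\<Sum>k=1..n. (x t (blk_right (B t) k) - x t k) * z ^ k) +
    (\<Sum>k=1..n. (rx n x t (blk_right (rB n B t) k) - rx n x t k) * z ^ k)"
proof -
  define nu where "nu = nat \<lceil>real n / 2\<rceil>"
  have nub: "n \<le> 2 * nu" "2 * nu \<le> n + 1" using nu_bounds[of n] unfolding nu_def by auto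
  define a where "a k = (x t (blk_right (B t) k) - x t k) * z ^ k" for k
  define a' where "a' k = (rx n x t (blk_right (rB n B t) k) - rx n x t k) * z ^ k" for k
  have ts': "twist_system n m \<rho> (rx n x) (rB n B)" by (rule rx_twist[OF ts])
  have bp: "block_partition n m (B t)" using ts unfolding twist_system_def by blast
  have bp': "block_partition n m (rB n B t)" using ts' unfolding twist_system_def by blast
  have srt: "\<And>i j. 1 \<le> i \<Longrightarrow> i \<le> j \<Longrightarrow> j \<le> n \<Longrightarrow> x t i \<le> x t j"
    using ts unfolding twist_system_def by blast
  have srt': "\<And>i j. 1 \<le> i \<Longrightarrow> i \<le> j \<Longrightarrow> j \<le> n \<Longrightarrow> rx n x t i \<le> rx n x t j"
    using ts' unfolding twist_system_def by blast
  have z0: "0 \<le> z ^ k" for k using z by simp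
  have a0: "0 \<le> a k" if "k \<in> {1..n}" for k
    using blk_right_bounds[OF bp that] srt[of k "blk_right (B t) k"] that z0[of k]
    unfolding a_def by simp
  have a0': "0 \<le> a' k" if "k \<in> {1..n}" for k
    using blk_right_bounds[OF bp' that] srt'[of k "blk_right (rB n B t) k"] that z0[of k]
    unfolding a'_def by simp
  have fin: "finite (B t)" using bp unfolding block_partition_def by blast
  have bdr: "\<And>u v. (u,v) \<in> B t \<Longrightarrow> 1 \<le> u \<and> u \<le> v \<and> v \<le> n"
    using bp unfolding block_partition_def by blast
  have un: "\<forall>k\<in>{1..n}. \<exists>!p. p \<in> B t \<and> fst p \<le> k \<and> k \<le> snd p"
    using bp unfolding block_partition_def by blast
  define kp where "kp p = max (fst p) (min (snd p) nu)" for p :: "nat \<times> nat"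
  have kpin: "fst p \<le> kp p \<and> kp p \<le> snd p \<and> kp p \<in> {1..n}" if "p \<in> B t" for p
    using bdr[of "fst p" "snd p"] that unfolding kp_def by auto
  have inj1: "inj_on kp (B t)"
  proof (rule inj_onI)
    fix p q assume pq: "p \<in> B t" "q \<in> B t" "kp p = kp q"
    have "\<exists>!r. r \<in> B t \<and> fst r \<le> kp p \<and> kp p \<le> snd r" using un kpin[OF pq(1)] by blast
    then show "p = q" using kpin[OF pq(1)] kpin[OF pq(2)] pq by metis
  qed
  have inj2: "inj_on (\<lambda>p. n + 1 - kp p) (B t)"
  proof (rule inj_onI)
    fix p q assume pq: "p \<in> B t" "q \<in> B t" "n + 1 - kp p = n + 1 - kp q"
    then have "kp p = kp q" using kpin[OF pq(1)] kpin[OF pq(2)] by auto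
    then show "p = q" using inj1 pq by (meson inj_onD)
  qed
  have key: "z ^ nu * (x t (snd p) - x t (fst p)) \<le> a (kp p) + a' (n + 1 - kp p)" if pB: "p \<in> B t" for p
  proof -
    obtain u v where uv: "p = (u,v)" by (cases p)
    define k where "k = kp p"
    have b: "1 \<le> u" "u \<le> v" "v \<le> n" using bdr pB uv by auto
    have k: "u \<le> k" "k \<le> v" "k \<in> {1..n}" using kpin[OF pB] uv unfolding k_def by auto
    have e1: "a k = (x t v - x t k) * z ^ k"
      unfolding a_def using blk_right_eq[OF bp pB[unfolded uv] k(1,2,3)] by simp
    have m: "(n + 1 - v, n + 1 - u) \<in> rB n B t" unfolding rB_def using pB uv by force
    have k2: "n + 1 - k \<in> {1..n}" "n + 1 - v \<le> n + 1 - k" "n + 1 - k \<le> n + 1 - u" using k b by auto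
    have e2: "a' (n + 1 - k) = (x t k - x t u) * z ^ (n + 1 - k)"
    proof -
      have "blk_right (rB n B t) (n + 1 - k) = n + 1 - u" using blk_right_eq[OF bp' m k2(2,3,1)] .
      moreover have "n + 1 - (n + 1 - u) = u" "n + 1 - (n + 1 - k) = k" using b k by auto
      ultimately show ?thesis unfolding a'_def rx_def by simp
    qed
    have c: "(nu \<le> k \<and> k = u) \<or> (nu \<le> n + 1 - k \<and> k = v) \<or> (nu \<le> k \<and> nu \<le> n + 1 - k)"
      using nub b unfolding k_def kp_def uv by auto
    have "z ^ nu * (x t v - x t u) \<le> (x t v - x t k) * z ^ k + (x t k - x t u) * z ^ (n + 1 - k)"
      by (rule key_ineq[OF z srt[OF b(1) k(1)] srt[OF _ k(2) b(3)] c]) (use b k in auto)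
    then show ?thesis using e1 e2 uv unfolding k_def by simp
  qed
  have "z ^ nu * (\<Sum>p\<in>B t. x t (snd p) - x t (fst p)) = (\<Sum>p\<in>B t. z ^ nu * (x t (snd p) - x t (fst p)))"
    by (simp add: sum_distrib_left)
  also have "\<dots> \<le> (\<Sum>p\<in>B t. a (kp p) + a' (n + 1 - kp p))"
    by (rule sum_mono) (rule key)
  also have "\<dots> = (\<Sum>p\<in>B t. a (kp p)) + (\<Sum>p\<in>B t. a' (n + 1 - kp p))"
    by (simp add: sum.distrib)
  also have "(\<Sum>p\<in>B t. a (kp p)) = sum a (kp ` B t)"
    using sum.reindex[OF inj1, of a] by simp
  also have "(\<Sum>p\<in>B t. a' (n + 1 - kp p)) = sum a' ((\<lambda>p. n + 1 - kp p) ` B t)"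
    using sum.reindex[OF inj2, of a'] by simp
  also have "sum a (kp ` B t) \<le> sum a {1..n}"
    by (rule sum_mono2) (use kpin a0 in auto)
  also have "sum a' ((\<lambda>p. n + 1 - kp p) ` B t) \<le> sum a' {1..n}"
  proof (rule sum_mono2)
    show "(\<lambda>p. n + 1 - kp p) ` B t \<subseteq> {1..n}"
    proof
      fix j assume "j \<in> (\<lambda>p. n + 1 - kp p) ` B t"
      then obtain p where "p \<in> B t" "j = n + 1 - kp p" by blast
      then show "j \<in> {1..n}" using kpin[of p] by auto
    qed
  qed (use a0' in auto)
  finally show ?thesis unfolding nu_def a_def a'_def by simp
qed


lemma A_nonneg:
  assumes ts: "twist_system n m \<rho> x B" and z: "1 \<le> z"
  shows "0 \<le> (\<Sum>k=1..n. (x t (blk_right (B t) k) - x t k) * z ^ k)"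
proof (rule sum_nonneg)
  fix k assume k: "k \<in> {1..n}"
  have bp: "block_partition n m (B t)" using ts unfolding twist_system_def by blast
  have srt: "\<And>i j. 1 \<le> i \<Longrightarrow> i \<le> j \<Longrightarrow> j \<le> n \<Longrightarrow> x t i \<le> x t j"
    using ts unfolding twist_system_def by blast
  show "0 \<le> (x t (blk_right (B t) k) - x t k) * z ^ k"
    using blk_right_bounds[OF bp k] srt[of k "blk_right (B t) k"] k z by simp
qed

lemma K_le: "(x,B) \<in> admissible n m \<rho> \<Longrightarrow> K_gen n x B z \<le> K_TW n m \<rho> z"
  unfolding K_TW_def by (rule SUP_upper2[where i="(x,B)"]) auto

theorem lemma3:
  fixes n m :: nat and \<rho> z :: real
  assumes "0 < \<rho>" and "\<rho> \<le> 1/2" and "1 \<le> z"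
  shows "E_TW n m \<rho> \<le> ennreal (2 * z powr (- real (nat \<lceil>real n / 2\<rceil>))) * K_TW n m \<rho> z"
proof -
  define nu where "nu = nat \<lceil>real n / 2\<rceil>"
  define c where "c = z powr (- real nu)"
  have z: "1 \<le> z" by fact
  have zp: "0 < z ^ nu" using z by simp
  have c: "c = 1 / z ^ nu" unfolding c_def using z by (simp add: powr_minus powr_realpow divide_inverse)
  have c0: "0 \<le> c" unfolding c using zp by simp
  have main: "one_energy x B \<le> ennreal c * K_TW n m \<rho> z + ennreal c * K_TW n m \<rho> z"
    if adm: "(x,B) \<in> admissible n m \<rho>" for x B
  proof -
    have ts: "twist_system n m \<rho> x B" using adm unfolding admissible_def by simp
    have ts': "twist_system n m \<rho> (rx n x) (rB n B)" by (rule rx_twist[OF ts])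
    define S where "S t = (\<Sum>p\<in>B t. x t (snd p) - x t (fst p))" for t
    define A where "A t = (\<Sum>k=1..n. (x t (blk_right (B t) k) - x t k) * z ^ k)" for t
    define A' where "A' t = (\<Sum>k=1..n. (rx n x t (blk_right (rB n B t) k) - rx n x t k) * z ^ k)" for t
    have A0: "0 \<le> A t" for t unfolding A_def by (rule A_nonneg[OF ts z])
    have A0': "0 \<le> A' t" for t unfolding A'_def by (rule A_nonneg[OF ts' z])
    have st: "ennreal (S t) \<le> ennreal c * ennreal (A t) + ennreal c * ennreal (A' t)" for t
    proof -
      have "z ^ nu * S t \<le> A t + A' t"
        using step_ineq[OF ts z, of t] unfolding S_def A_def A'_def nu_def .
      then have "S t \<le> (A t + A' t) / z ^ nu" using zp by (simp add: pos_le_divide_eq mult.commute)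
      also have "\<dots> = c * A t + c * A' t" unfolding c by (simp add: add_divide_distrib)
      finally have "ennreal (S t) \<le> ennreal (c * A t + c * A' t)" by (rule ennreal_leI)
      also have "\<dots> = ennreal c * ennreal (A t) + ennreal c * ennreal (A' t)"
        using c0 A0[of t] A0'[of t] by (simp add: ennreal_plus ennreal_mult)
      finally show ?thesis .
    qed
    have "one_energy x B = (\<Sum>t. ennreal (S t))" unfolding one_energy_def S_def by simp
    also have "\<dots> \<le> (\<Sum>t. ennreal c * ennreal (A t) + ennreal c * ennreal (A' t))"
      by (rule suminf_le[OF st summableI summableI])
    also have "\<dots> = (\<Sum>t. ennreal c * ennreal (A t)) + (\<Sum>t. ennreal c * ennreal (A' t))"
      by (rule suminf_add[symmetric, OF summableI summableI])
    also have "\<dots> = ennreal c * K_gen n x B z + ennreal c * K_gen n (rx n x) (rB n B) z"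
      unfolding K_gen_def A_def A'_def by simp
    also have "\<dots> \<le> ennreal c * K_TW n m \<rho> z + ennreal c * K_TW n m \<rho> z"
      by (intro add_mono mult_left_mono K_le adm rx_adm) auto
    finally show ?thesis .
  qed
  have "E_TW n m \<rho> \<le> ennreal c * K_TW n m \<rho> z + ennreal c * K_TW n m \<rho> z"
    unfolding E_TW_def by (rule SUP_least) (use main in auto)
  also have "\<dots> = ennreal (2 * c) * K_TW n m \<rho> z"
  proof -
    have "ennreal (2 * c) = ennreal c + ennreal c" by (subst mult_2, rule ennreal_plus[OF c0 c0])
    then show ?thesis by (simp only: distrib_right)
  qed
  finally show ?thesis unfolding c_def nu_def .
qed

end
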